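(* Let $(S,\oplus,\odot)$ be a semiring whose addition $\oplus$ is commutative (multiplication $\odot$ need not be commutative). For all positive integers $n,p,q$ with $p+q\le n$ and all maps $f:\binom{[n]}{p}\to S$, $g:\binom{[n]}{q}\to S$, the value $$\bigoplus_{X\in\binom{[n]}{p},\,Y\in\binom{[n]}{q},\,X\cap Y=\emptyset} f(X)\odot g(Y)$$ can be computed by an arithmetic circuit over $\oplus,\odot$ with $O((n^p+n^q)\log n)$ gates, where the constant in the $O$-notation does not depend on $n,p,q$.
   Context: $\binom{[n]}{p}$ denotes the family of $p$-element subsets of $[n]=\{1,\dots,n\}$. An arithmetic circuit has input gates for the values $f(X)$ and $g(Y)$ and binary gates each computing $\oplus$ or $\odot$ (with left/right order of the $\odot$ arguments specified) of its two predecessors. *)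

theory Defs
  imports Complex_Main
begin

definition subsets :: "nat \<Rightarrow> nat \<Rightarrow> nat set set" where
  "subsets n p = {X. X \<subseteq> {1..n} \<and> card X = p}"

text \<open>Sum over a finite nonempty set in a commutative additive semigroup
  (no zero element is assumed).\<close>
definition nsum :: "('b \<Rightarrow> 'a::ab_semigroup_add) \<Rightarrow> 'b set \<Rightarrow> 'a" where
  "nsum h A = the (Finite_Set.fold
      (\<lambda>x acc. Some (case acc of None \<Rightarrow> h x | Some a \<Rightarrow> h x + a)) None A)"

text \<open>Arithmetic circuits as straight-line programs: gate k is either an input
  gate for f(X) or g(Y), or a binary gate (oplus or odot) whose arguments are
  earlier gates i, j < k.
  The output is the last gate; the size is the number of gates.\<close>
datatype gate = InF "nat set" | InG "nat set" | GAdd nat nat | GMul nat nat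

fun gate_ok :: "nat \<Rightarrow> nat \<Rightarrow> nat \<Rightarrow> nat \<Rightarrow> gate \<Rightarrow> bool" where
  "gate_ok n p q k (InF X) = (X \<in> subsets n p)"
| "gate_ok n p q k (InG Y) = (Y \<in> subsets n q)"
| "gate_ok n p q k (GAdd i j) = (i < k \<and> j < k)"
| "gate_ok n p q k (GMul i j) = (i < k \<and> j < k)"

definition circuit_wf :: "nat \<Rightarrow> nat \<Rightarrow> nat \<Rightarrow> gate list \<Rightarrow> bool" where
  "circuit_wf n p q C = (C \<noteq> [] \<and> (\<forall>k < length C. gate_ok n p q k (C ! k)))"

fun gate_val :: "(nat set \<Rightarrow> 'a::semiring) \<Rightarrow> (nat set \<Rightarrow> 'a) \<Rightarrow> 'a list \<Rightarrow> gate \<Rightarrow> 'a" where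
  "gate_val f g vs (InF X) = f X"
| "gate_val f g vs (InG Y) = g Y"
| "gate_val f g vs (GAdd i j) = vs ! i + vs ! j"
| "gate_val f g vs (GMul i j) = vs ! i * vs ! j"

definition gate_values :: "(nat set \<Rightarrow> 'a::semiring) \<Rightarrow> (nat set \<Rightarrow> 'a) \<Rightarrow> gate list \<Rightarrow> 'a list" where
  "gate_values f g C = foldl (\<lambda>vs gt. vs @ [gate_val f g vs gt]) [] C"

definition circuit_value :: "(nat set \<Rightarrow> 'a::semiring) \<Rightarrow> (nat set \<Rightarrow> 'a) \<Rightarrow> gate list \<Rightarrow> 'a" where
  "circuit_value f g C = last (gate_values f g C)"

end

theory Submission
  imports Defs
begin



definition nsF :: "('b \<Rightarrow> 'a::ab_semigroup_add) \<Rightarrow> 'b \<Rightarrow> 'a option \<Rightarrow> 'a option" where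
  "nsF h x acc = Some (case acc of None \<Rightarrow> h x | Some a \<Rightarrow> h x + a)"

lemma nsF_cfc: "comp_fun_commute (nsF h)"
  by unfold_locales (simp add: fun_eq_iff nsF_def add_ac split: option.split)

lemma nsF_ins: "finite A \<Longrightarrow> x \<notin> A \<Longrightarrow> Finite_Set.fold (nsF h) z (insert x A) = nsF h x (Finite_Set.fold (nsF h) z A)"
  using comp_fun_commute_on.fold_insert[of UNIV "nsF h" x A z] nsF_cfc comp_fun_commute_def' by blast

lemma nsum_fold: "nsum h A = the (Finite_Set.fold (nsF h) None A)"
  unfolding nsum_def nsF_def by (rule refl)

lemma fold_nsF: "finite A \<Longrightarrow> Finite_Set.fold (nsF h) None A = (if A = {} then None else Some (nsum h A))"
proof (induction A rule: finite_induct)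
  case empty then show ?case by simp
next
  case (insert x F)
  have e: "Finite_Set.fold (nsF h) None (insert x F) = nsF h x (Finite_Set.fold (nsF h) None F)"
    using insert by (simp add: nsF_ins)
  obtain v where "nsF h x (Finite_Set.fold (nsF h) None F) = Some v" by (simp add: nsF_def)
  with e show ?case by (simp add: nsum_fold)
qed

lemma nsum_insert: "finite A \<Longrightarrow> x \<notin> A \<Longrightarrow> A \<noteq> {} \<Longrightarrow> nsum h (insert x A) = h x + nsum h A"
proof -
  assume a: "finite A" "x \<notin> A" "A \<noteq> {}"
  have "Finite_Set.fold (nsF h) None (insert x A) = nsF h x (Finite_Set.fold (nsF h) None A)"
    using a by (simp add: nsF_ins)
  also have "\<dots> = nsF h x (Some (nsum h A))" using a fold_nsF[of A h] by simp
  also have "\<dots> = Some (h x + nsum h A)" by (simp add: nsF_def)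
  finally show ?thesis by (simp add: nsum_fold)
qed

lemma nsum_single[simp]: "nsum h {x} = h x"
  using nsF_ins[of "{}" x h None] by (simp add: nsum_fold nsF_def)

lemma nsum_Un: assumes "finite B" "B \<noteq> {}" "finite A" "A \<inter> B = {}" "A \<noteq> {}"
  shows "nsum h (A \<union> B) = nsum h A + nsum h B"
  using assms
proof (induction B rule: finite_ne_induct)
  case (singleton x)
  then show ?case using nsum_insert[of A x h] by (simp add: add.commute)
next
  case (insert x F)
  have "A \<union> insert x F = insert x (A \<union> F)" by auto
  then have "nsum h (A \<union> insert x F) = h x + nsum h (A \<union> F)"
    using insert nsum_insert[of "A \<union> F" x h] by auto
  also have "\<dots> = nsum h A + (h x + nsum h F)" using insert by (simp add: add_ac)
  finally show ?case using insert nsum_insert[of F x h] by simp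
qed

lemma nsum_cong: "finite A \<Longrightarrow> (\<And>x. x \<in> A \<Longrightarrow> h x = k x) \<Longrightarrow> nsum h A = nsum k A"
proof (induction A rule: finite_induct)
  case empty then show ?case by (simp add: nsum_def)
next
  case (insert x F)
  then show ?case by (cases "F = {}") (auto simp: nsum_insert)
qed

lemma nsum_reindex: "finite A \<Longrightarrow> inj_on \<phi> A \<Longrightarrow> nsum h (\<phi> ` A) = nsum (h \<circ> \<phi>) A"
proof (induction A rule: finite_induct)
  case empty then show ?case by (simp add: nsum_def)
next
  case (insert x F)
  then show ?case by (cases "F = {}") (auto simp: nsum_insert)
qed

lemma nsum_mult_right: assumes "finite A" "A \<noteq> {}" shows "nsum h A * (c::'a::semiring) = nsum (\<lambda>x. h x * c) A"
  using assms
proof (induction A rule: finite_ne_induct)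
  case (singleton x) then show ?case by simp
next
  case (insert x F)
  then show ?case by (simp add: nsum_insert distrib_right)
qed

lemma nsum_UN: assumes "finite I" "I \<noteq> {}" "\<And>i. i \<in> I \<Longrightarrow> finite (A i) \<and> A i \<noteq> {}"
   "\<And>i j. i \<in> I \<Longrightarrow> j \<in> I \<Longrightarrow> i \<noteq> j \<Longrightarrow> A i \<inter> A j = {}"
   shows "nsum h (\<Union>i\<in>I. A i) = nsum (\<lambda>i. nsum h (A i)) I"
  using assms
proof (induction I rule: finite_ne_induct)
  case (singleton x) then show ?case by simp
next
  case (insert x F)
  have "(\<Union>i\<in>insert x F. A i) = A x \<union> (\<Union>i\<in>F. A i)" by auto
  moreover have "A x \<inter> (\<Union>i\<in>F. A i) = {}" using insert.prems(2) insert.hyps by fastforce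
  moreover have "(\<Union>i\<in>F. A i) \<noteq> {}" using insert by auto
  ultimately have "nsum h (\<Union>i\<in>insert x F. A i) = nsum h (A x) + nsum h (\<Union>i\<in>F. A i)"
    using insert by (simp add: nsum_Un)
  then show ?case using insert by (simp add: nsum_insert)
qed




datatype expr = EF "nat set" | EG "nat set" | EAdd expr expr | EMul expr expr

fun eval :: "(nat set \<Rightarrow> 'a::semiring) \<Rightarrow> (nat set \<Rightarrow> 'a) \<Rightarrow> expr \<Rightarrow> 'a" where
  "eval f g (EF X) = f X"
| "eval f g (EG Y) = g Y"
| "eval f g (EAdd a b) = eval f g a + eval f g b"
| "eval f g (EMul a b) = eval f g a * eval f g b"

fun subs :: "expr \<Rightarrow> expr set" where
  "subs (EF X) = {EF X}"
| "subs (EG Y) = {EG Y}"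
| "subs (EAdd a b) = insert (EAdd a b) (subs a \<union> subs b)"
| "subs (EMul a b) = insert (EMul a b) (subs a \<union> subs b)"

lemma subs_self: "e \<in> subs e" by (cases e) auto

lemma finite_subs: "finite (subs e)" by (induction e) auto

lemma subs_size: "x \<in> subs e \<Longrightarrow> size x \<le> size e"
  by (induction e) auto

lemma subs_trans: "x \<in> subs e \<Longrightarrow> subs x \<subseteq> subs e"
  by (induction e) auto

fun children :: "expr \<Rightarrow> expr set" where
  "children (EAdd a b) = {a, b}"
| "children (EMul a b) = {a, b}"
| "children _ = {}"

lemma children_size: "c \<in> children e \<Longrightarrow> size c < size e"
  by (cases e) auto

lemma children_subs: assumes "e \<in> subs t" "c \<in> children e" shows "c \<in> subs t"
  using subs_trans[OF assms(1)] assms(2) by (cases e) (auto simp: subs_self)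

definition idx :: "expr list \<Rightarrow> expr \<Rightarrow> nat" where
  "idx xs a = (LEAST i. i < length xs \<and> xs ! i = a)"

fun mkgate :: "expr list \<Rightarrow> expr \<Rightarrow> gate" where
  "mkgate xs (EF X) = InF X"
| "mkgate xs (EG Y) = InG Y"
| "mkgate xs (EAdd a b) = GAdd (idx xs a) (idx xs b)"
| "mkgate xs (EMul a b) = GMul (idx xs a) (idx xs b)"

lemma gate_values_snoc: "gate_values f g (C @ [gt]) = gate_values f g C @ [gate_val f g (gate_values f g C) gt]"
  by (simp add: gate_values_def)

lemma length_gate_values[simp]: "length (gate_values f g C) = length C"
  by (induction C rule: rev_induct) (auto simp: gate_values_snoc, simp add: gate_values_def)

lemma idx_lt: assumes "a \<in> set (take k xs)" shows "idx xs a < k" "xs ! idx xs a = a"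
proof -
  obtain i where i: "i < k" "i < length xs" "xs ! i = a" using assms
    by (auto simp: in_set_conv_nth)
  have "idx xs a \<le> i" unfolding idx_def using i by (intro Least_le) auto
  then show "idx xs a < k" using i by simp
  show "xs ! idx xs a = a" unfolding idx_def using LeastI[of "\<lambda>i. i < length xs \<and> xs ! i = a" i] i by auto
qed

lemma compile_list:
  assumes ch: "\<And>k c. k < length xs \<Longrightarrow> c \<in> children (xs ! k) \<Longrightarrow> c \<in> set (take k xs)"
  shows "k \<le> length xs \<Longrightarrow> gate_values f g (map (mkgate xs) (take k xs)) = map (eval f g) (take k xs)"
proof (induction k)
  case 0 then show ?case by (simp add: gate_values_def)
next
  case (Suc k)
  have tk: "take (Suc k) xs = take k xs @ [xs ! k]" using Suc.prems by (simp add: take_Suc_conv_app_nth)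
  have IH: "gate_values f g (map (mkgate xs) (take k xs)) = map (eval f g) (take k xs)" using Suc by simp
  have "gate_val f g (map (eval f g) (take k xs)) (mkgate xs (xs ! k)) = eval f g (xs ! k)"
  proof (cases "xs ! k")
    case (EAdd a b)
    then have "a \<in> set (take k xs)" "b \<in> set (take k xs)" using ch[of k] Suc.prems by auto
    then show ?thesis using EAdd idx_lt[of _ k xs] Suc.prems by simp
  next
    case (EMul a b)
    then have "a \<in> set (take k xs)" "b \<in> set (take k xs)" using ch[of k] Suc.prems by auto
    then show ?thesis using EMul idx_lt[of _ k xs] Suc.prems by simp
  qed auto
  then show ?case unfolding tk by (simp add: gate_values_snoc IH)
qed

lemma compile:
  assumes vf: "\<And>X. EF X \<in> subs t \<Longrightarrow> X \<in> subsets n p"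
      and vg: "\<And>Y. EG Y \<in> subs t \<Longrightarrow> Y \<in> subsets n q"
  shows "\<exists>C. circuit_wf n p q C \<and> length C = card (subs t) \<and> (\<forall>f g. circuit_value f g C = eval f g t)"
proof -
  obtain xs0 where xs0: "distinct xs0" "set xs0 = subs t - {t}"
    using finite_distinct_list[of "subs t - {t}"] finite_subs by auto
  define ys where "ys = sort_key size xs0"
  define xs where "xs = ys @ [t]"
  have ys: "distinct ys" "set ys = subs t - {t}" "sorted (map size ys)"
    using xs0 unfolding ys_def by (auto simp: distinct_sort)
  have setxs: "set xs = subs t" using ys subs_self[of t] unfolding xs_def by auto
  have dxs: "distinct xs" using ys unfolding xs_def by auto
  have xsin: "\<And>k. k < length xs \<Longrightarrow> xs ! k \<in> subs t" using setxs nth_mem by blast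
  have ch: "c \<in> set (take k xs)" if k: "k < length xs" and c: "c \<in> children (xs ! k)" for k c
  proof -
    have cs: "c \<in> subs t" using children_subs[OF xsin[OF k] c] .
    have szc: "size c < size (xs ! k)" using children_size[OF c] .
    also have "\<dots> \<le> size t" using subs_size xsin[OF k] by blast
    finally have "c \<noteq> t" by auto
    with cs ys have "c \<in> set ys" by auto
    then obtain i where i: "i < length ys" "ys ! i = c" by (auto simp: in_set_conv_nth)
    have "i < k"
    proof (rule ccontr)
      assume "\<not> i < k"
      then have ki: "k \<le> i" by simp
      then have "k < length ys" using i by simp
      then have xk: "xs ! k = ys ! k" unfolding xs_def by (simp add: nth_append)
      have "map size ys ! k \<le> map size ys ! i" using sorted_nth_mono[OF ys(3) ki] i by simp
      then show False using szc xk i \<open>k < length ys\<close> by simp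
    qed
    then show ?thesis using i k unfolding xs_def
      by (auto simp: in_set_conv_nth nth_append intro!: exI[of _ i])
  qed
  define C where "C = map (mkgate xs) xs"
  have len: "length C = card (subs t)" unfolding C_def using dxs setxs distinct_card by fastforce
  have wf: "circuit_wf n p q C" unfolding circuit_wf_def
  proof (intro conjI allI impI)
    show "C \<noteq> []" unfolding C_def xs_def by simp
    fix k assume k: "k < length C"
    then have k': "k < length xs" unfolding C_def by simp
    show "gate_ok n p q k (C ! k)"
    proof (cases "xs ! k")
      case (EF X) then show ?thesis using vf xsin[OF k'] k' unfolding C_def by simp
    next
      case (EG Y) then show ?thesis using vg xsin[OF k'] k' unfolding C_def by simp
    next
      case (EAdd a b)
      then have "a \<in> set (take k xs)" "b \<in> set (take k xs)" using ch[OF k'] by auto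
      then show ?thesis using EAdd idx_lt k' unfolding C_def by simp
    next
      case (EMul a b)
      then have "a \<in> set (take k xs)" "b \<in> set (take k xs)" using ch[OF k'] by auto
      then show ?thesis using EMul idx_lt k' unfolding C_def by simp
    qed
  qed
  have "circuit_value f g C = eval f g t" for f :: "nat set \<Rightarrow> 'a::semiring" and g
  proof -
    have "gate_values f g (map (mkgate xs) (take (length xs) xs)) = map (eval f g) (take (length xs) xs)"
      by (rule compile_list) (use ch in auto)
    then have "gate_values f g C = map (eval f g) xs" unfolding C_def by simp
    then show ?thesis unfolding circuit_value_def xs_def by simp
  qed
  then show ?thesis using wf len by blast
qed




definition ext :: "nat \<Rightarrow> nat \<Rightarrow> (nat set \<Rightarrow> 'a::semiring) \<Rightarrow> nat set \<Rightarrow> nat set \<Rightarrow> 'a" where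
  "ext n p f R W = nsum f {X \<in> subsets n p. X \<inter> R = W}"

lemma finite_subsets[simp]: "finite (subsets n p)"
  unfolding subsets_def by (rule finite_subset[of _ "Pow {1..n}"]) auto

lemma ext_nonempty:
  assumes "R \<subseteq> {1..n}" "W \<subseteq> R" "card W \<le> p" "p - card W \<le> n - card R"
  shows "{X \<in> subsets n p. X \<inter> R = W} \<noteq> {}"
proof -
  have fR: "finite R" using assms(1) finite_subset by blast
  have "card ({1..n} - R) = n - card R" using assms(1) fR by (simp add: card_Diff_subset)
  then obtain E where E: "E \<subseteq> {1..n} - R" "card E = p - card W"
    using obtain_subset_with_card_n[of "p - card W" "{1..n} - R"] assms(4) by auto
  have fW: "finite W" using fR assms(2) finite_subset by blast
  have fE: "finite E" using E(1) finite_subset by blast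
  have dj: "W \<inter> E = {}" using E(1) assms(2) by auto
  have "card (W \<union> E) = p" using card_Un_disjoint[OF fW fE dj] E(2) assms(3) by simp
  moreover have "W \<union> E \<subseteq> {1..n}" using E(1) assms(1,2) by auto
  moreover have "(W \<union> E) \<inter> R = W" using E(1) assms(2) by auto
  ultimately show ?thesis unfolding subsets_def by blast
qed

lemma ext_empty:
  assumes "R \<subseteq> {1..n}" "\<not> (card W \<le> p \<and> p - card W \<le> n - card R)"
  shows "{X \<in> subsets n p. X \<inter> R = W} = {}"
proof (rule ccontr)
  assume "{X \<in> subsets n p. X \<inter> R = W} \<noteq> {}"
  then obtain X where X: "X \<subseteq> {1..n}" "card X = p" "X \<inter> R = W" unfolding subsets_def by auto
  have fR: "finite R" using assms(1) finite_subset by blast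
  have fX: "finite X" using X(1) finite_subset by blast
  have "X = W \<union> (X - R)" using X(3) by auto
  have "X - R \<subseteq> {1..n} - R" using X(1) by auto
  then have "card (X - R) \<le> n - card R" using card_mono[of "{1..n} - R" "X - R"] assms(1) fR
    by (simp add: card_Diff_subset)
  moreover have "card X = card W + card (X - R)" using X(3) fX
    by (metis Diff_Diff_Int card_Diff_subset_Int card_mono Diff_subset finite_Diff inf_commute
        le_add_diff_inverse finite_Int card_Int_Diff)
  moreover have "card W \<le> card X" using X(3) fX by (metis Int_lower1 card_mono)
  ultimately show False using assms(2) X(2) by linarith
qed

lemma ext_split:
  assumes "e \<in> R" "e \<notin> W"
  shows "{X \<in> subsets n p. X \<inter> (R - {e}) = W} =
    {X \<in> subsets n p. X \<inter> R = W} \<union> {X \<in> subsets n p. X \<inter> R = insert e W}"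
  using assms by auto

context
  fixes n p :: nat
begin

fun Yt :: "nat \<Rightarrow> (nat set \<Rightarrow> expr) \<Rightarrow> nat list \<Rightarrow> nat set \<Rightarrow> expr" where
  "Yt c0 base [] W = base W"
| "Yt c0 base (e # es) W =
     (if p \<le> card W then Yt c0 base es W
      else if \<not> (p - card W \<le> c0 + length es) then Yt c0 base es (insert e W)
      else EAdd (Yt c0 base es W) (Yt c0 base es (insert e W)))"

lemma Yt_sem:
  assumes R0: "R0 \<subseteq> {1..n}" and c0: "c0 = n - card R0"
    and base: "\<And>W. W \<subseteq> R0 \<Longrightarrow> card W \<le> p \<Longrightarrow> p - card W \<le> c0 \<Longrightarrow> eval f g (base W) = ext n p f R0 W"
  shows "distinct es \<Longrightarrow> set es \<subseteq> R0 \<Longrightarrow> W \<subseteq> R0 - set es \<Longrightarrow> card W \<le> p \<Longrightarrow> p - card W \<le> c0 + length es \<Longrightarrow>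
    eval f g (Yt c0 base es W) = ext n p f (R0 - set es) W"
proof (induction es arbitrary: W)
  case Nil then show ?case using base by simp
next
  case (Cons e es)
  define R where "R = R0 - set es"
  have fR0: "finite R0" using R0 finite_subset by blast
  have RR0: "R \<subseteq> {1..n}" using R0 unfolding R_def by auto
  have cR: "card R = card R0 - length es" unfolding R_def using Cons.prems fR0
    by (simp add: card_Diff_subset distinct_card)
  have cR0: "card R0 \<le> n" using card_mono[OF _ R0] by simp
  have les: "length es \<le> card R0"
    using card_mono[OF fR0, of "set es"] Cons.prems(1,2) distinct_card[of es] by auto
  have nR: "n - card R = c0 + length es" using cR cR0 c0 les by linarith
  have eR: "e \<in> R" "e \<notin> W" using Cons.prems unfolding R_def by auto
  have reg: "R0 - set (e # es) = R - {e}" unfolding R_def by auto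
  have WR: "W \<subseteq> R0 - set es" using Cons.prems by auto
  have fW: "finite W" using WR fR0 finite_subset by blast
  have WeR: "insert e W \<subseteq> R0 - set es" using WR eR unfolding R_def by auto
  have dist: "distinct es" "set es \<subseteq> R0" using Cons.prems by auto
  have split: "{X \<in> subsets n p. X \<inter> (R - {e}) = W} =
    {X \<in> subsets n p. X \<inter> R = W} \<union> {X \<in> subsets n p. X \<inter> R = insert e W}"
    using ext_split[OF eR] .
  show ?case
  proof (cases "p \<le> card W")
    case True
    then have cW: "card W = p" using Cons.prems by simp
    have e2: "{X \<in> subsets n p. X \<inter> R = insert e W} = {}"
      using ext_empty[where W="insert e W" and p=p and R=R and n=n, OF RR0] cW fW eR by simp
    have "eval f g (Yt c0 base (e # es) W) = ext n p f R W"
      using True Cons.IH[OF dist WR] cW unfolding R_def by simp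
    then show ?thesis unfolding ext_def reg split e2 by (simp add: ext_def)
  next
    case False
    note F = False
    have cWe: "card (insert e W) = card W + 1" using fW eR by simp
    have v2: "eval f g (Yt c0 base es (insert e W)) = ext n p f R (insert e W)"
      using Cons.IH[OF dist WeR] cWe F Cons.prems(5) unfolding R_def by simp
    show ?thesis
    proof (cases "p - card W \<le> c0 + length es")
      case False
      have e1: "{X \<in> subsets n p. X \<inter> R = W} = {}"
        using ext_empty[where W="W" and p=p and R=R and n=n, OF RR0] False nR by simp
      show ?thesis using F False v2 unfolding ext_def reg split e1 by (simp add: ext_def)
    next
      case True
      have v1: "eval f g (Yt c0 base es W) = ext n p f R W"
        using Cons.IH[OF dist WR] True F unfolding R_def by simp
      have ne1: "{X \<in> subsets n p. X \<inter> R = W} \<noteq> {}"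
        using ext_nonempty[where W="W" and p=p and R=R and n=n, OF RR0] True nR WR F unfolding R_def by simp
      have ne2: "{X \<in> subsets n p. X \<inter> R = insert e W} \<noteq> {}"
        using ext_nonempty[where W="insert e W" and p=p and R=R and n=n, OF RR0] True nR WeR F cWe Cons.prems(5) unfolding R_def by simp
      have "ext n p f (R - {e}) W = ext n p f R W + ext n p f R (insert e W)"
        unfolding ext_def split
        by (rule nsum_Un) (use ne1 ne2 eR in auto)
      then show ?thesis using F True v1 v2 unfolding reg by simp
    qed
  qed
qed

end




context
  fixes n p L :: nat
begin

definition Rg :: "nat \<Rightarrow> nat set \<Rightarrow> nat set" where
  "Rg l D = {x \<in> {1..n}. (x - 1) div 2 ^ l \<in> D}"

definition par :: "nat set \<Rightarrow> nat set" where
  "par D = (\<lambda>d. d div 2) ` D"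

definition esl :: "nat \<Rightarrow> nat set \<Rightarrow> nat list" where
  "esl l D = sorted_list_of_set (Rg (Suc l) (par D) - Rg l D)"

fun Gr :: "nat \<Rightarrow> nat set \<Rightarrow> nat set \<Rightarrow> expr" where
  "Gr 0 D W = EF W"
| "Gr (Suc r) D W = Yt p (n - card (Rg (L - r) (par D))) (Gr r (par D)) (esl (L - Suc r) D) W"

definition binv :: "nat \<Rightarrow> nat set \<Rightarrow> bool" where
  "binv l D = (D \<noteq> {} \<and> (\<forall>d\<in>D. d * 2 ^ l < n))"

lemma Rg_sub: "Rg l D \<subseteq> {1..n}" unfolding Rg_def by auto

lemma finite_Rg[simp]: "finite (Rg l D)" using Rg_sub finite_subset by blast

lemma inv_par: assumes "binv l D" shows "binv (Suc l) (par D)"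
proof -
  have "d div 2 * 2 ^ Suc l < n" if d: "d \<in> D" for d
  proof -
    have "d div 2 * 2 ^ Suc l = (d div 2 * 2) * 2 ^ l" by (simp add: power_Suc mult_ac)
    also have "\<dots> \<le> d * 2 ^ l" by (intro mult_right_mono) auto
    also have "\<dots> < n" using assms d unfolding binv_def by blast
    finally show ?thesis .
  qed
  then show ?thesis using assms unfolding binv_def par_def by auto
qed

lemma Rg_mono: "Rg l D \<subseteq> Rg (Suc l) (par D)"
proof
  fix x assume "x \<in> Rg l D"
  then have x: "x \<in> {1..n}" "(x - 1) div 2 ^ l \<in> D" unfolding Rg_def by auto
  have "(x - 1) div 2 ^ Suc l = ((x - 1) div 2 ^ l) div 2" by (metis div_mult2_eq power_Suc2)
  then show "x \<in> Rg (Suc l) (par D)" using x unfolding Rg_def par_def by auto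
qed

lemma Rg_top: assumes "n \<le> 2 ^ L" "binv L D" shows "Rg L D = {1..n}"
proof -
  obtain d where d: "d \<in> D" using assms(2) unfolding binv_def by auto
  then have "d * 2 ^ L < n" using assms(2) unfolding binv_def by auto
  then have "d = 0" using assms(1) by (cases d) auto
  then have "0 \<in> D" using d by simp
  moreover have "(x - 1) div 2 ^ L = 0" if "x \<in> {1..n}" for x using that assms(1) by auto
  ultimately show ?thesis unfolding Rg_def by auto
qed

lemma Gr_sem:
  assumes nL: "n \<le> 2 ^ L"
  shows "r \<le> L \<Longrightarrow> binv (L - r) D \<Longrightarrow> W \<subseteq> Rg (L - r) D \<Longrightarrow> card W \<le> p \<Longrightarrow>
    p - card W \<le> n - card (Rg (L - r) D) \<Longrightarrow> eval f g (Gr r D W) = ext n p f (Rg (L - r) D) W"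
proof (induction r arbitrary: D W)
  case 0
  then have R: "Rg L D = {1..n}" using Rg_top nL by simp
  then have cW: "card W = p" using 0 by simp
  have WP: "W \<in> subsets n p" using 0 R cW unfolding subsets_def by auto
  have "{X \<in> subsets n p. X \<inter> {1..n} = W} = {W}" using WP unfolding subsets_def by auto
  then show ?case unfolding ext_def using R by simp
next
  case (Suc r)
  define l where "l = L - Suc r"
  have lr: "L - r = Suc l" using Suc.prems(1) unfolding l_def by simp
  define R0 where "R0 = Rg (Suc l) (par D)"
  define es where "es = esl l D"
  have invD: "binv l D" using Suc.prems(2) unfolding l_def .
  have invP: "binv (L - r) (par D)" using inv_par[OF invD] lr by simp
  have ses: "set es = R0 - Rg l D" "distinct es" unfolding es_def esl_def R0_def by auto
  have RR: "R0 - set es = Rg l D" using ses Rg_mono[of l D] unfolding R0_def by auto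
  have cR0: "card R0 \<le> n" using card_mono[OF _ Rg_sub] unfolding R0_def by simp
  have les: "length es = card R0 - card (Rg l D)"
    using ses distinct_card[of es] card_Diff_subset[OF finite_Rg Rg_mono[of l D]] unfolding R0_def by simp
  have cRl: "card (Rg l D) \<le> card R0" using card_mono[OF finite_Rg Rg_mono[of l D]] unfolding R0_def .
  have base: "eval f g (Gr r (par D) W') = ext n p f R0 W'"
    if "W' \<subseteq> R0" "card W' \<le> p" "p - card W' \<le> n - card R0" for W'
    using Suc.IH[of "par D" W'] Suc.prems(1) invP that unfolding R0_def lr by simp
  have "eval f g (Yt p (n - card R0) (Gr r (par D)) es W) = ext n p f (R0 - set es) W"
    by (rule Yt_sem[OF _ refl base])
       (use Rg_sub ses RR Suc.prems les cR0 cRl in \<open>auto simp: R0_def l_def\<close>)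
  moreover have "Gr (Suc r) D W = Yt p (n - card R0) (Gr r (par D)) es W"
    unfolding Gr.simps lr l_def[symmetric] R0_def es_def by (rule refl)
  ultimately show ?case using RR unfolding l_def by simp
qed

end




fun Sm :: "(nat set \<Rightarrow> expr) \<Rightarrow> nat set list \<Rightarrow> expr" where
  "Sm h [] = EF {}"
| "Sm h [y] = h y"
| "Sm h (y # z # ys) = EAdd (h y) (Sm h (z # ys))"

lemma Sm_sem: "distinct ys \<Longrightarrow> ys \<noteq> [] \<Longrightarrow> eval f g (Sm h ys) = nsum (\<lambda>y. eval f g (h y)) (set ys)"
proof (induction h ys rule: Sm.induct)
  case (3 h y z ys)
  then show ?case by (simp add: nsum_insert)
qed auto

definition D0 :: "nat set \<Rightarrow> nat set" where "D0 Y = (\<lambda>x. x - 1) ` Y"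

definition Tm :: "nat \<Rightarrow> nat \<Rightarrow> nat \<Rightarrow> nat set \<Rightarrow> expr" where
  "Tm n p L Y = EMul (Gr n p L L (D0 Y) {}) (EG Y)"

lemma Rg0: "Y \<subseteq> {1..n} \<Longrightarrow> Rg n 0 (D0 Y) = Y"
proof -
  assume Y: "Y \<subseteq> {1..n}"
  have "x \<in> Y" if "x \<in> {1..n}" "x - 1 = y - 1" "y \<in> Y" for x y
  proof -
    have "y \<ge> 1" using Y that(3) by auto
    then have "x = y" using that(1,2) by (simp, linarith)
    then show ?thesis using that by simp
  qed
  then show ?thesis unfolding Rg_def D0_def using Y by (auto simp: image_iff)
qed

lemma Tm_sem:
  assumes nL: "n \<le> 2 ^ L" and Y: "Y \<in> subsets n q" and pq: "p + q \<le> n" "0 < q"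
  shows "eval f g (Tm n p L Y) = nsum (\<lambda>X. f X * g Y) {X \<in> subsets n p. X \<inter> Y = {}}"
proof -
  have Ys: "Y \<subseteq> {1..n}" "card Y = q" using Y unfolding subsets_def by auto
  then have "Y \<noteq> {}" using pq by auto
  have "\<forall>d\<in>Y. d - 1 < n" using Ys(1) by fastforce
  then have inv0: "binv n 0 (D0 Y)" unfolding binv_def D0_def using \<open>Y \<noteq> {}\<close> by auto
  have "eval f g (Gr n p L L (D0 Y) {}) = ext n p f (Rg n (L - L) (D0 Y)) {}"
    by (rule Gr_sem[OF nL]) (use inv0 Rg0[OF Ys(1)] Ys pq in auto)
  then have e: "eval f g (Gr n p L L (D0 Y) {}) = nsum f {X \<in> subsets n p. X \<inter> Y = {}}"
    using Rg0[OF Ys(1)] unfolding ext_def by simp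
  have ne: "{X \<in> subsets n p. X \<inter> Y = {}} \<noteq> {}"
    using ext_nonempty[where R=Y and W="{}" and n=n and p=p] Ys pq by auto
  show ?thesis unfolding Tm_def using e nsum_mult_right[OF _ ne] by simp
qed

lemma pairs_eq: "{(X, Y). X \<in> subsets n p \<and> Y \<in> subsets n q \<and> X \<inter> Y = {}} =
   (\<Union>Y\<in>subsets n q. (\<lambda>X. (X, Y)) ` {X \<in> subsets n p. X \<inter> Y = {}})"
  by auto

lemma total_sem:
  assumes nL: "n \<le> 2 ^ L" and pq: "p + q \<le> n" "0 < q"
    and ys: "distinct ys" "set ys = subsets n q"
  shows "eval f g (Sm (Tm n p L) ys) = nsum (\<lambda>(X, Y). f X * g Y)
                {(X, Y). X \<in> subsets n p \<and> Y \<in> subsets n q \<and> X \<inter> Y = {}}"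
proof -
  have nq: "subsets n q \<noteq> {}"
  proof -
    obtain Y where "Y \<subseteq> {1..n}" "card Y = q" using obtain_subset_with_card_n[of q "{1..n}"] pq by auto
    then show ?thesis unfolding subsets_def by auto
  qed
  then have "ys \<noteq> []" using ys by auto
  then have "eval f g (Sm (Tm n p L) ys) = nsum (\<lambda>Y. eval f g (Tm n p L Y)) (subsets n q)"
    using Sm_sem[OF ys(1) \<open>ys \<noteq> []\<close>] ys(2) by simp
  also have "\<dots> = nsum (\<lambda>Y. nsum (\<lambda>X. f X * g Y) {X \<in> subsets n p. X \<inter> Y = {}}) (subsets n q)"
    by (rule nsum_cong) (auto simp: Tm_sem[OF nL _ pq])
  also have "\<dots> = nsum (\<lambda>Y. nsum (\<lambda>(X, Y). f X * g Y) ((\<lambda>X. (X, Y)) ` {X \<in> subsets n p. X \<inter> Y = {}})) (subsets n q)"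
    by (rule nsum_cong) (auto simp: nsum_reindex inj_on_def comp_def)
  also have "\<dots> = nsum (\<lambda>(X, Y). f X * g Y) (\<Union>Y\<in>subsets n q. (\<lambda>X. (X, Y)) ` {X \<in> subsets n p. X \<inter> Y = {}})"
  proof (rule nsum_UN[symmetric])
    fix Y assume "Y \<in> subsets n q"
    then have "Y \<subseteq> {1..n}" "card Y = q" unfolding subsets_def by auto
    then show "finite ((\<lambda>X. (X, Y)) ` {X \<in> subsets n p. X \<inter> Y = {}}) \<and> (\<lambda>X. (X, Y)) ` {X \<in> subsets n p. X \<inter> Y = {}} \<noteq> {}"
      using ext_nonempty[where R=Y and W="{}" and n=n and p=p] pq by auto
  qed (use nq in auto)
  finally show ?thesis unfolding pairs_eq .
qed




lemma Yt_subs: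
  "distinct es \<Longrightarrow> W \<inter> set es = {} \<Longrightarrow> finite W \<Longrightarrow> card W \<le> p \<Longrightarrow> p - card W \<le> c0 + length es \<Longrightarrow>
   subs (Yt p c0 base es W) \<subseteq>
     {t. \<exists>i W'. i \<le> length es \<and> W' \<subseteq> W \<union> set es \<and> card W' < p \<and> t = Yt p c0 base (drop i es) W' \<and> (\<exists>a b. t = EAdd a b)}
     \<union> \<Union>{subs (base W'') | W''. W'' \<subseteq> W \<union> set es \<and> finite W'' \<and> card W'' \<le> p \<and> p - card W'' \<le> c0}"
proof (induction es arbitrary: W)
  case Nil then show ?case by auto
next
  case (Cons e es)
  let ?A = "\<lambda>es W. {t. \<exists>i W'. i \<le> length es \<and> W' \<subseteq> W \<union> set es \<and> card W' < p \<and> t = Yt p c0 base (drop i es) W' \<and> (\<exists>a b. t = EAdd a b)}"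
  let ?B = "\<lambda>es W. \<Union>{subs (base W'') | W''. W'' \<subseteq> W \<union> set es \<and> finite W'' \<and> card W'' \<le> p \<and> p - card W'' \<le> c0}"
  have monoA: "?A es W' \<subseteq> ?A (e # es) W" if "W' \<subseteq> insert e W" for W'
  proof
    fix t assume "t \<in> ?A es W'"
    then obtain i W2 where "i \<le> length es" "W2 \<subseteq> W' \<union> set es" "card W2 < p" "t = Yt p c0 base (drop i es) W2" "\<exists>a b. t = EAdd a b"
      by blast
    then show "t \<in> ?A (e # es) W" using that
      by (intro CollectI exI[of _ "Suc i"] exI[of _ W2]) auto
  qed
  have monoB: "?B es W' \<subseteq> ?B (e # es) W" if "W' \<subseteq> insert e W" for W'
  proof
    fix t assume "t \<in> ?B es W'"
    then obtain W2 where "t \<in> subs (base W2)" "W2 \<subseteq> W' \<union> set es" "finite W2" "card W2 \<le> p" "p - card W2 \<le> c0"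
      by blast
    then show "t \<in> ?B (e # es) W" using that
      by (intro UnionI[of "subs (base W2)"]) auto
  qed
  have monoAB: "?A es W' \<union> ?B es W' \<subseteq> ?A (e # es) W \<union> ?B (e # es) W" if "W' \<subseteq> insert e W" for W'
    using monoA[OF that] monoB[OF that] by (rule Un_mono)
  have dj: "distinct es" "W \<inter> set es = {}" "e \<notin> W" "insert e W \<inter> set es = {}" using Cons.prems by auto
  show ?case
  proof (cases "p \<le> card W")
    case True
    then have "subs (Yt p c0 base (e # es) W) = subs (Yt p c0 base es W)" by (simp only: Yt.simps if_True)
    also have "\<dots> \<subseteq> ?A es W \<union> ?B es W"
      by (rule Cons.IH) (use Cons.prems dj True in auto)
    also have "\<dots> \<subseteq> ?A (e # es) W \<union> ?B (e # es) W" by (rule monoAB) auto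
    finally show ?thesis .
  next
    case False
    have cI: "card (insert e W) = Suc (card W)" using Cons.prems(3) dj by simp
    have IH2: "subs (Yt p c0 base es (insert e W)) \<subseteq> ?A es (insert e W) \<union> ?B es (insert e W)"
      by (rule Cons.IH) (use Cons.prems dj cI False in auto)
    show ?thesis
    proof (cases "p - card W \<le> c0 + length es")
      case False2: False
      then have "subs (Yt p c0 base (e # es) W) = subs (Yt p c0 base es (insert e W))" using False by simp
      also have "\<dots> \<subseteq> ?A (e # es) W \<union> ?B (e # es) W" by (rule subset_trans[OF IH2 monoAB]) auto
      finally show ?thesis .
    next
      case True
      have IH1: "subs (Yt p c0 base es W) \<subseteq> ?A es W \<union> ?B es W"
        by (rule Cons.IH) (use Cons.prems dj True in auto)
      have self: "Yt p c0 base (e # es) W \<in> ?A (e # es) W"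
        using False True by (intro CollectI exI[of _ 0] exI[of _ W]) auto
      have "subs (Yt p c0 base (e # es) W) = insert (Yt p c0 base (e # es) W) (subs (Yt p c0 base es W) \<union> subs (Yt p c0 base es (insert e W)))"
        using False True by simp
      also have "\<dots> \<subseteq> ?A (e # es) W \<union> ?B (e # es) W"
      proof (intro insert_subsetI Un_least)
        show "Yt p c0 base (e # es) W \<in> ?A (e # es) W \<union> ?B (e # es) W" using self by (rule UnI1)
        show "subs (Yt p c0 base es W) \<subseteq> ?A (e # es) W \<union> ?B (e # es) W"
          by (rule subset_trans[OF IH1 monoAB]) auto
        show "subs (Yt p c0 base es (insert e W)) \<subseteq> ?A (e # es) W \<union> ?B (e # es) W"
          by (rule subset_trans[OF IH2 monoAB]) auto
      qed
      finally show ?thesis .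
    qed
  qed
qed




definition YS :: "nat \<Rightarrow> nat \<Rightarrow> nat \<Rightarrow> nat \<Rightarrow> nat set \<Rightarrow> expr set" where
  "YS n p L l D = {t. \<exists>i W'. i \<le> length (esl n l D) \<and> W' \<subseteq> Rg n (Suc l) (par D) \<and> card W' < p \<and>
     t = Yt p (n - card (Rg n (Suc l) (par D))) (Gr n p L (L - Suc l) (par D)) (drop i (esl n l D)) W' \<and> (\<exists>a b. t = EAdd a b)}"

definition TS :: "nat \<Rightarrow> nat \<Rightarrow> nat \<Rightarrow> nat \<Rightarrow> expr set" where
  "TS n p q L = EF ` subsets n p \<union> (\<Union>l<L. \<Union>D\<in>{D. binv n l D \<and> card D \<le> q}. YS n p L l D)"

lemma inv_sub: assumes "binv n l D" shows "D \<subseteq> {..<n}"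
proof
  fix d assume d: "d \<in> D"
  have "d \<le> d * 2 ^ l" by simp
  also have "\<dots> < n" using assms d unfolding binv_def by blast
  finally show "d \<in> {..<n}" by simp
qed

lemma Gr_subs:
  assumes nL: "n \<le> 2 ^ L"
  shows "r \<le> L \<Longrightarrow> binv n (L - r) D \<Longrightarrow> card D \<le> q \<Longrightarrow> W \<subseteq> Rg n (L - r) D \<Longrightarrow> card W \<le> p \<Longrightarrow>
    p - card W \<le> n - card (Rg n (L - r) D) \<Longrightarrow> subs (Gr n p L r D W) \<subseteq> TS n p q L"
proof (induction r arbitrary: D W)
  case 0
  then have R: "Rg n L D = {1..n}" using Rg_top nL by simp
  then have cW: "card W = p" using 0 by simp
  have WP: "W \<in> subsets n p" using 0 R cW unfolding subsets_def by auto
  then show ?case unfolding TS_def by simp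
next
  case (Suc r)
  define l where "l = L - Suc r"
  have lr: "L - r = Suc l" using Suc.prems(1) unfolding l_def by simp
  have lL: "l < L" using Suc.prems(1) unfolding l_def by simp
  define R0 where "R0 = Rg n (Suc l) (par D)"
  define es where "es = esl n l D"
  have invD: "binv n l D" using Suc.prems(2) unfolding l_def .
  have invP: "binv n (L - r) (par D)" using inv_par[OF invD] lr by simp
  have "D \<subseteq> {..<n}" using inv_sub[OF invD] .
  then have "finite D" using finite_subset by blast
  then have cP: "card (par D) \<le> q" using card_image_le[of D "\<lambda>d. d div 2"] Suc.prems(3) unfolding par_def
    by linarith
  have ses: "set es = R0 - Rg n l D" "distinct es" unfolding es_def esl_def R0_def by auto
  have cR0: "card R0 \<le> n" using card_mono[OF _ Rg_sub] unfolding R0_def by simp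
  have les: "length es = card R0 - card (Rg n l D)"
    using ses distinct_card[of es] card_Diff_subset[OF finite_Rg Rg_mono[of n l D]] unfolding R0_def by simp
  have cRl: "card (Rg n l D) \<le> card R0" using card_mono[OF finite_Rg Rg_mono[of n l D]] unfolding R0_def .
  have WRl: "W \<subseteq> Rg n l D" using Suc.prems(4) unfolding l_def .
  have fW: "finite W" using finite_subset[OF WRl finite_Rg] .
  have eqG: "Gr n p L (Suc r) D W = Yt p (n - card R0) (Gr n p L r (par D)) es W"
    unfolding Gr.simps lr l_def[symmetric] R0_def es_def by (rule refl)
  have WU: "W \<union> set es \<subseteq> R0" using WRl ses Rg_mono[of n l D] unfolding R0_def by auto
  have "subs (Yt p (n - card R0) (Gr n p L r (par D)) es W) \<subseteq>
     {t. \<exists>i W'. i \<le> length es \<and> W' \<subseteq> W \<union> set es \<and> card W' < p \<and> t = Yt p (n - card R0) (Gr n p L r (par D)) (drop i es) W' \<and> (\<exists>a b. t = EAdd a b)}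
     \<union> \<Union>{subs (Gr n p L r (par D) W'') | W''. W'' \<subseteq> W \<union> set es \<and> finite W'' \<and> card W'' \<le> p \<and> p - card W'' \<le> n - card R0}"
    by (rule Yt_subs) (use ses WRl fW Suc.prems les cR0 cRl in \<open>auto simp: l_def\<close>)
  also have "\<dots> \<subseteq> TS n p q L"
  proof (rule Un_least)
    have "{t. \<exists>i W'. i \<le> length es \<and> W' \<subseteq> W \<union> set es \<and> card W' < p \<and> t = Yt p (n - card R0) (Gr n p L r (par D)) (drop i es) W' \<and> (\<exists>a b. t = EAdd a b)}
       \<subseteq> YS n p L l D"
    proof
      fix t assume "t \<in> {t. \<exists>i W'. i \<le> length es \<and> W' \<subseteq> W \<union> set es \<and> card W' < p \<and> t = Yt p (n - card R0) (Gr n p L r (par D)) (drop i es) W' \<and> (\<exists>a b. t = EAdd a b)}"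
      then obtain i W' where iW: "i \<le> length es" "W' \<subseteq> W \<union> set es" "card W' < p"
        "t = Yt p (n - card R0) (Gr n p L r (par D)) (drop i es) W'" "\<exists>a b. t = EAdd a b" by blast
      have rl: "L - Suc l = r" using Suc.prems(1) unfolding l_def by simp
      show "t \<in> YS n p L l D" unfolding YS_def
        apply (rule CollectI, rule exI[of _ i], rule exI[of _ W'])
        using iW WU unfolding rl R0_def es_def by blast
    qed
    also have "\<dots> \<subseteq> TS n p q L" unfolding TS_def
    proof (rule subsetI, rule UnI2)
      fix t assume "t \<in> YS n p L l D"
      then show "t \<in> (\<Union>l<L. \<Union>D\<in>{D. binv n l D \<and> card D \<le> q}. YS n p L l D)"
        using lL invD Suc.prems(3) by blast
    qed
    finally show "{t. \<exists>i W'. i \<le> length es \<and> W' \<subseteq> W \<union> set es \<and> card W' < p \<and> t = Yt p (n - card R0) (Gr n p L r (par D)) (drop i es) W' \<and> (\<exists>a b. t = EAdd a b)}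
       \<subseteq> TS n p q L" .
  next
    show "\<Union>{subs (Gr n p L r (par D) W'') | W''. W'' \<subseteq> W \<union> set es \<and> finite W'' \<and> card W'' \<le> p \<and> p - card W'' \<le> n - card R0} \<subseteq> TS n p q L"
    proof (rule Union_least)
      fix X assume "X \<in> {subs (Gr n p L r (par D) W'') | W''. W'' \<subseteq> W \<union> set es \<and> finite W'' \<and> card W'' \<le> p \<and> p - card W'' \<le> n - card R0}"
      then obtain W'' where W'': "X = subs (Gr n p L r (par D) W'')" "W'' \<subseteq> W \<union> set es" "card W'' \<le> p" "p - card W'' \<le> n - card R0"
        by blast
      show "X \<subseteq> TS n p q L" unfolding W''(1)
      proof (rule Suc.IH)
        show "r \<le> L" using Suc.prems(1) by simp
        show "binv n (L - r) (par D)" by (rule invP)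
        show "card (par D) \<le> q" by (rule cP)
        show "W'' \<subseteq> Rg n (L - r) (par D)" using W''(2) WU unfolding R0_def lr by blast
        show "card W'' \<le> p" by (rule W''(3))
        show "p - card W'' \<le> n - card (Rg n (L - r) (par D))" using W''(4) unfolding R0_def lr .
      qed
    qed
  qed
  finally show ?case unfolding eqG .
qed




lemma exp_partial:
  fixes x :: real assumes "0 \<le> x" shows "(\<Sum>j<N. x ^ j / fact j) \<le> exp x"
proof -
  have s: "summable (\<lambda>j. x ^ j / fact j)"
    using summable_exp[of x] by (simp add: divide_inverse mult.commute)
  have "(\<Sum>j<N. x ^ j / fact j) \<le> (\<Sum>j. x ^ j / fact j)"
    by (rule sum_le_suminf[OF s]) (use assms in auto)
  also have "\<dots> = exp x" unfolding exp_def by (simp add: divide_inverse mult.commute)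
  finally show ?thesis .
qed

lemma nat_core:
  fixes m s n k j p q :: nat
  assumes "1 \<le> s" "s \<le> n" "m * s \<le> 2 * n" "k \<le> q" "j < p"
  shows "m ^ k * s ^ (j + 1) \<le> 2 ^ k * (n ^ p + n ^ q)"
proof -
  have n1: "1 \<le> n" using assms by simp
  have ms: "m ^ k * s ^ k \<le> 2 ^ k * n ^ k"
  proof -
    have "m ^ k * s ^ k = (m * s) ^ k" by (simp add: power_mult_distrib)
    also have "\<dots> \<le> (2 * n) ^ k" by (rule power_mono) (use assms in auto)
    finally show ?thesis by (simp add: power_mult_distrib)
  qed
  show ?thesis
  proof (cases "j + 1 \<le> k")
    case True
    have "m ^ k * s ^ (j + 1) \<le> m ^ k * s ^ k" using power_increasing[OF True, of s] assms(1) by simp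
    also have "\<dots> \<le> 2 ^ k * n ^ k" by (rule ms)
    also have "\<dots> \<le> 2 ^ k * n ^ q" using power_increasing[OF assms(4) n1] by simp
    also have "\<dots> \<le> 2 ^ k * (n ^ p + n ^ q)" by simp
    finally show ?thesis .
  next
    case False
    then have e: "j + 1 = k + (j + 1 - k)" by simp
    have "m ^ k * s ^ (j + 1) = (m ^ k * s ^ k) * s ^ (j + 1 - k)" by (subst e) (simp add: power_add)
    also have "\<dots> \<le> (2 ^ k * n ^ k) * n ^ (j + 1 - k)"
      by (rule mult_mono[OF ms power_mono]) (use assms in auto)
    also have "\<dots> = 2 ^ k * n ^ (j + 1)" by (subst (2) e) (simp add: power_add)
    also have "\<dots> \<le> 2 ^ k * n ^ p" using power_increasing[of "j+1" p n] assms(5) n1 by simp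
    also have "\<dots> \<le> 2 ^ k * (n ^ p + n ^ q)" by simp
    finally show ?thesis .
  qed
qed

lemma choose_real_le: "real (a choose b) \<le> real a ^ b / fact b"
proof -
  have "real ((a choose b) * fact b) \<le> real (a ^ b)" using binomial_fact_pow[of a b] by linarith
  then have "real (a choose b) * fact b \<le> real a ^ b" by simp
  then show ?thesis by (simp add: field_simps)
qed

lemma term_bound:
  fixes m s n k j p q :: nat
  assumes "1 \<le> s" "s \<le> n" "m * s \<le> 2 * n" "1 \<le> k" "k \<le> q" "j < p"
  shows "real (m choose k) * real (2 * k * s + 1) * real ((2 * k * s) choose j)
    \<le> 3 * k * 2 ^ k * (2 * k) ^ j / (fact k * fact j) * (real n ^ p + real n ^ q)"
proof -
  have a: "real (2 * k * s + 1) \<le> 3 * k * s"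
  proof -
    have "1 \<le> k * s" using assms by simp
    then have "1 \<le> real (k * s)" by linarith
    then show ?thesis by simp
  qed
  have "real (m choose k) * real (2 * k * s + 1) * real ((2 * k * s) choose j)
      \<le> (real m ^ k / fact k) * (3 * k * s) * (real (2 * k * s) ^ j / fact j)"
    by (intro mult_mono choose_real_le a) auto
  also have "\<dots> = 3 * k * (2 * k) ^ j / (fact k * fact j) * (real m ^ k * real s ^ (j + 1))"
    by (simp add: power_mult_distrib field_simps)
  also have "\<dots> \<le> 3 * k * (2 * k) ^ j / (fact k * fact j) * (2 ^ k * (real n ^ p + real n ^ q))"
  proof (rule mult_left_mono)
    have "real (m ^ k * s ^ (j + 1)) \<le> real (2 ^ k * (n ^ p + n ^ q))"
      using nat_core[OF assms(1,2,3,5,6)] by linarith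
    then show "real m ^ k * real s ^ (j + 1) \<le> 2 ^ k * (real n ^ p + real n ^ q)" by simp
  qed simp
  also have "\<dots> = 3 * k * 2 ^ k * (2 * k) ^ j / (fact k * fact j) * (real n ^ p + real n ^ q)"
    by simp
  finally show ?thesis .
qed

definition Kc :: real where "Kc = 6 * exp 2 * exp (2 * exp 2)"

lemma sumk_bound: "(\<Sum>i<q. 3 * real (Suc i) * 2 ^ Suc i * exp (2 * real (Suc i)) / fact (Suc i)) \<le> Kc"
proof -
  define a :: real where "a = 2 * exp 2"
  have a0: "0 \<le> a" unfolding a_def by simp
  have t: "3 * real (Suc i) * 2 ^ Suc i * exp (2 * real (Suc i)) / fact (Suc i) = 3 * a * (a ^ i / fact i)" for i
  proof -
    have "exp (2 * real (Suc i)) = exp 2 ^ Suc i"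
      using exp_of_nat_mult[of "Suc i" 2] by (simp add: mult.commute)
    then have e: "2 ^ Suc i * exp (2 * real (Suc i)) = a ^ Suc i" unfolding a_def by (simp add: power_mult_distrib)
    have "3 * real (Suc i) * 2 ^ Suc i * exp (2 * real (Suc i)) / fact (Suc i)
        = (real (Suc i) * (3 * a ^ Suc i)) / (real (Suc i) * fact i)"
      using e by (simp only: fact_Suc of_nat_Suc mult.assoc mult.left_commute)
    also have "\<dots> = (3 * a ^ Suc i) / fact i"
      by (rule nonzero_mult_divide_mult_cancel_left) simp
    also have "\<dots> = 3 * a * (a ^ i / fact i)" by simp
    finally show ?thesis .
  qed
  have "(\<Sum>i<q. 3 * real (Suc i) * 2 ^ Suc i * exp (2 * real (Suc i)) / fact (Suc i)) = 3 * a * (\<Sum>i<q. a ^ i / fact i)"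
    unfolding t by (simp add: sum_distrib_left)
  also have "\<dots> \<le> 3 * a * exp a" by (rule mult_left_mono[OF exp_partial[OF a0]]) (use a0 in simp)
  also have "\<dots> = Kc" unfolding Kc_def a_def by simp
  finally show ?thesis .
qed

lemma level_bound:
  fixes m s n p q :: nat
  assumes "1 \<le> s" "s \<le> n" "m * s \<le> 2 * n"
  shows "(\<Sum>i<q. real (m choose Suc i) * (real (2 * Suc i * s + 1) * (\<Sum>j<p. real ((2 * Suc i * s) choose j))))
     \<le> Kc * (real n ^ p + real n ^ q)"
proof -
  define N where "N = real n ^ p + real n ^ q"
  have N0: "0 \<le> N" unfolding N_def by simp
  have inner: "real (m choose Suc i) * (real (2 * Suc i * s + 1) * (\<Sum>j<p. real ((2 * Suc i * s) choose j)))
     \<le> 3 * real (Suc i) * 2 ^ Suc i * exp (2 * real (Suc i)) / fact (Suc i) * N" if iq: "i < q" for i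
  proof -
    define k where "k = Suc i"
    have "real (m choose k) * (real (2 * k * s + 1) * (\<Sum>j<p. real ((2 * k * s) choose j)))
        = (\<Sum>j<p. real (m choose k) * real (2 * k * s + 1) * real ((2 * k * s) choose j))"
      by (simp add: sum_distrib_left mult.assoc)
    also have "\<dots> \<le> (\<Sum>j<p. 3 * k * 2 ^ k * (2 * k) ^ j / (fact k * fact j) * N)"
      by (rule sum_mono, unfold N_def, rule term_bound) (use assms iq in \<open>auto simp: k_def\<close>)
    also have "\<dots> = 3 * k * 2 ^ k / fact k * (\<Sum>j<p. (2 * real k) ^ j / fact j) * N"
      by (simp add: sum_distrib_left sum_distrib_right field_simps)
    also have "\<dots> \<le> 3 * k * 2 ^ k / fact k * exp (2 * real k) * N"
      by (intro mult_right_mono mult_left_mono exp_partial N0) auto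
    finally show ?thesis unfolding k_def by simp
  qed
  have "(\<Sum>i<q. real (m choose Suc i) * (real (2 * Suc i * s + 1) * (\<Sum>j<p. real ((2 * Suc i * s) choose j))))
     \<le> (\<Sum>i<q. 3 * real (Suc i) * 2 ^ Suc i * exp (2 * real (Suc i)) / fact (Suc i) * N)"
    by (rule sum_mono) (rule inner, simp)
  also have "\<dots> = (\<Sum>i<q. 3 * real (Suc i) * 2 ^ Suc i * exp (2 * real (Suc i)) / fact (Suc i)) * N"
    by (simp add: sum_distrib_right)
  also have "\<dots> \<le> Kc * N" by (rule mult_right_mono[OF sumk_bound N0])
  finally show ?thesis unfolding N_def .
qed




lemma card_Rg: assumes "finite D" shows "card (Rg n l D) \<le> card D * 2 ^ l"
proof -
  have "Rg n l D \<subseteq> (\<Union>d\<in>D. {d * 2 ^ l + 1 .. d * 2 ^ l + 2 ^ l})"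
  proof
    fix x assume "x \<in> Rg n l D"
    then have x: "1 \<le> x" "(x - 1) div 2 ^ l \<in> D" unfolding Rg_def by auto
    define d where "d = (x - 1) div 2 ^ l"
    have "d * 2 ^ l \<le> x - 1" unfolding d_def by (metis div_mult_mod_eq le_add1)
    moreover have "x - 1 < d * 2 ^ l + 2 ^ l" unfolding d_def
      by (metis add.commute div_mult_mod_eq mod_less_divisor nat_add_left_cancel_less zero_less_numeral zero_less_power)
    ultimately have "x \<in> {d * 2 ^ l + 1 .. d * 2 ^ l + 2 ^ l}" using x by auto
    then show "x \<in> (\<Union>d\<in>D. {d * 2 ^ l + 1 .. d * 2 ^ l + 2 ^ l})" using x unfolding d_def by blast
  qed
  then have "card (Rg n l D) \<le> card (\<Union>d\<in>D. {d * 2 ^ l + 1 .. d * 2 ^ l + 2 ^ l})"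
    by (intro card_mono) (use assms in auto)
  also have "\<dots> \<le> (\<Sum>d\<in>D. card {d * 2 ^ l + 1 .. d * 2 ^ l + 2 ^ l})" by (rule card_UN_le[OF assms])
  also have "\<dots> = card D * 2 ^ l" by simp
  finally show ?thesis .
qed

lemma card_small: assumes "finite A" shows "card {W. W \<subseteq> A \<and> card W < p} \<le> (\<Sum>j<p. card A choose j)"
proof -
  have "{W. W \<subseteq> A \<and> card W < p} = (\<Union>j<p. {W. W \<subseteq> A \<and> card W = j})" by auto
  then have "card {W. W \<subseteq> A \<and> card W < p} \<le> (\<Sum>j<p. card {W. W \<subseteq> A \<and> card W = j})"
    using card_UN_le[of "{..<p}" "\<lambda>j. {W. W \<subseteq> A \<and> card W = j}"] by simp
  also have "\<dots> = (\<Sum>j<p. card A choose j)" using n_subsets[OF assms] by simp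
  finally show ?thesis .
qed

lemma card_YS: assumes "binv n l D"
  shows "card (YS n p L l D) \<le> (2 * card D * 2 ^ l + 1) * (\<Sum>j<p. (2 * card D * 2 ^ l) choose j)"
proof -
  define R1 where "R1 = Rg n (Suc l) (par D)"
  define es where "es = esl n l D"
  define F where "F = (\<lambda>(i, W'). Yt p (n - card R1) (Gr n p L (L - Suc l) (par D)) (drop i es) W')"
  have fD: "finite D" using inv_sub[OF assms] finite_subset by blast
  have cR1: "card R1 \<le> 2 * card D * 2 ^ l"
  proof -
    have "card R1 \<le> card (par D) * 2 ^ Suc l" unfolding R1_def by (rule card_Rg) (simp add: par_def fD)
    also have "\<dots> \<le> card D * 2 ^ Suc l" unfolding par_def by (intro mult_right_mono card_image_le fD) simp
    finally show ?thesis by simp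
  qed
  have les: "length es \<le> card R1"
  proof -
    have "length es = card (R1 - Rg n l D)" unfolding es_def esl_def R1_def by simp
    also have "\<dots> \<le> card R1" unfolding R1_def by (rule card_mono) auto
    finally show ?thesis .
  qed
  have "YS n p L l D \<subseteq> F ` ({..length es} \<times> {W'. W' \<subseteq> R1 \<and> card W' < p})"
  proof
    fix t assume "t \<in> YS n p L l D"
    then obtain i W' where iW: "i \<le> length es" "W' \<subseteq> R1" "card W' < p"
      "t = Yt p (n - card R1) (Gr n p L (L - Suc l) (par D)) (drop i es) W'"
      unfolding YS_def R1_def es_def by blast
    then have "t = F (i, W')" unfolding F_def by simp
    moreover have "(i, W') \<in> {..length es} \<times> {W'. W' \<subseteq> R1 \<and> card W' < p}" using iW by simp
    ultimately show "t \<in> F ` ({..length es} \<times> {W'. W' \<subseteq> R1 \<and> card W' < p})" by (rule image_eqI)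
  qed
  moreover have fS: "finite ({..length es} \<times> {W'. W' \<subseteq> R1 \<and> card W' < p})" by (simp add: R1_def)
  ultimately have "card (YS n p L l D) \<le> card (F ` ({..length es} \<times> {W'. W' \<subseteq> R1 \<and> card W' < p}))"
    by (intro card_mono finite_imageI)
  also have "\<dots> \<le> card ({..length es} \<times> {W'. W' \<subseteq> R1 \<and> card W' < p})" by (rule card_image_le[OF fS])
  also have "\<dots> = (length es + 1) * card {W'. W' \<subseteq> R1 \<and> card W' < p}" by (simp add: card_cartesian_product)
  also have "\<dots> \<le> (2 * card D * 2 ^ l + 1) * (\<Sum>j<p. (2 * card D * 2 ^ l) choose j)"
  proof (rule mult_mono)
    show "length es + 1 \<le> 2 * card D * 2 ^ l + 1" using les cR1 by simp
    have "card {W'. W' \<subseteq> R1 \<and> card W' < p} \<le> (\<Sum>j<p. card R1 choose j)"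
      by (rule card_small) (simp add: R1_def)
    also have "\<dots> \<le> (\<Sum>j<p. (2 * card D * 2 ^ l) choose j)"
      by (intro sum_mono binomial_right_mono cR1)
    finally show "card {W'. W' \<subseteq> R1 \<and> card W' < p} \<le> (\<Sum>j<p. (2 * card D * 2 ^ l) choose j)" .
  qed auto
  finally show ?thesis .
qed

lemma Dset_eq: "{D. binv n l D \<and> card D \<le> q} = (\<Union>i<q. {D. D \<subseteq> {d. d * 2 ^ l < n} \<and> card D = Suc i})"
proof (intro equalityI subsetI)
  fix D assume "D \<in> {D. binv n l D \<and> card D \<le> q}"
  then have D: "binv n l D" "card D \<le> q" by auto
  have "finite D" using inv_sub[OF D(1)] finite_subset by blast
  then have "card D \<noteq> 0" using D(1) unfolding binv_def by simp
  then obtain i where i: "card D = Suc i" by (cases "card D") auto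
  then show "D \<in> (\<Union>i<q. {D. D \<subseteq> {d. d * 2 ^ l < n} \<and> card D = Suc i})"
    using D unfolding binv_def by auto
next
  fix D assume "D \<in> (\<Union>i<q. {D. D \<subseteq> {d. d * 2 ^ l < n} \<and> card D = Suc i})"
  then obtain i where i: "i < q" "D \<subseteq> {d. d * 2 ^ l < n}" "card D = Suc i" by auto
  then have "D \<noteq> {}" by auto
  then show "D \<in> {D. binv n l D \<and> card D \<le> q}" using i unfolding binv_def by auto
qed

lemma level_card:
  assumes sl: "2 ^ l < n"
  shows "real (\<Sum>D\<in>{D. binv n l D \<and> card D \<le> q}. card (YS n p L l D)) \<le> Kc * (real n ^ p + real n ^ q)"
proof -
  define s where "s = (2::nat) ^ l"
  define M where "M = {d. d * s < n}"
  define A where "A = (\<lambda>i. {D. D \<subseteq> M \<and> card D = Suc i})"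
  define B where "B = (\<lambda>k. (2 * k * s + 1) * (\<Sum>j<p. (2 * k * s) choose j))"
  define m' where "m' = (n - 1) div s + 1"
  have s1: "1 \<le> s" unfolding s_def by simp
  have sn: "s \<le> n" using sl unfolding s_def by simp
  have Msub: "M \<subseteq> {..<m'}"
  proof
    fix d assume "d \<in> M"
    then have "d * s \<le> n - 1" unfolding M_def by simp
    then have "d \<le> (n - 1) div s" using s1 by (simp add: less_eq_div_iff_mult_less_eq)
    then show "d \<in> {..<m'}" unfolding m'_def by simp
  qed
  have fM: "finite M" using Msub finite_subset by blast
  have cM: "card M \<le> m'" using card_mono[OF _ Msub] by simp
  have ms: "m' * s \<le> 2 * n"
  proof -
    have "m' * s = (n - 1) div s * s + s" unfolding m'_def by (simp add: algebra_simps)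
    also have "\<dots> \<le> (n - 1) + s" by (simp add: div_times_less_eq_dividend)
    finally show ?thesis using sn by simp
  qed
  have fA: "finite (A i)" for i
  proof -
    have "A i \<subseteq> Pow M" unfolding A_def by auto
    then show ?thesis using fM finite_subset by blast
  qed
  have "(\<Sum>D\<in>{D. binv n l D \<and> card D \<le> q}. card (YS n p L l D)) = (\<Sum>D\<in>(\<Union>i<q. A i). card (YS n p L l D))"
    unfolding Dset_eq A_def M_def s_def ..
  also have "\<dots> = (\<Sum>i<q. \<Sum>D\<in>A i. card (YS n p L l D))"
    by (rule sum.UNION_disjoint) (use fA in \<open>auto simp: A_def\<close>)
  also have "\<dots> \<le> (\<Sum>i<q. \<Sum>D\<in>A i. B (Suc i))"
  proof (intro sum_mono)
    fix i D assume "D \<in> A i"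
    then have D: "D \<subseteq> M" "card D = Suc i" unfolding A_def by auto
    have "binv n l D" using D unfolding binv_def M_def s_def by auto
    then show "card (YS n p L l D) \<le> B (Suc i)" using card_YS[of n l D p L] D unfolding B_def s_def by simp
  qed
  also have "\<dots> = (\<Sum>i<q. (card M choose Suc i) * B (Suc i))"
    unfolding A_def using n_subsets[OF fM] by simp
  also have "\<dots> \<le> (\<Sum>i<q. (m' choose Suc i) * B (Suc i))"
    by (intro sum_mono mult_right_mono binomial_right_mono cM) simp
  finally have le: "(\<Sum>D\<in>{D. binv n l D \<and> card D \<le> q}. card (YS n p L l D)) \<le> (\<Sum>i<q. (m' choose Suc i) * B (Suc i))" .
  have "real (\<Sum>D\<in>{D. binv n l D \<and> card D \<le> q}. card (YS n p L l D)) \<le> real (\<Sum>i<q. (m' choose Suc i) * B (Suc i))"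
    using le by linarith
  also have "\<dots> = (\<Sum>i<q. real (m' choose Suc i) * (real (2 * Suc i * s + 1) * (\<Sum>j<p. real ((2 * Suc i * s) choose j))))"
    unfolding B_def of_nat_sum of_nat_mult by (simp only: of_nat_sum)
  also have "\<dots> \<le> Kc * (real n ^ p + real n ^ q)" by (rule level_bound[OF s1 sn ms])
  finally show ?thesis .
qed




lemma card_TS:
  assumes lt: "\<And>l. l < L \<Longrightarrow> 2 ^ l < n"
  shows "real (card (TS n p q L)) \<le> real n ^ p + real L * (Kc * (real n ^ p + real n ^ q))"
proof -
  have fDs: "finite {D. binv n l D \<and> card D \<le> q}" for l
  proof -
    have "{D. binv n l D \<and> card D \<le> q} \<subseteq> Pow {..<n}" using inv_sub by blast
    then show ?thesis using finite_subset by blast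
  qed
  have "card (TS n p q L) \<le> card (EF ` subsets n p) + card (\<Union>l<L. \<Union>D\<in>{D. binv n l D \<and> card D \<le> q}. YS n p L l D)"
    unfolding TS_def by (rule card_Un_le)
  also have "\<dots> \<le> card (subsets n p) + (\<Sum>l<L. \<Sum>D\<in>{D. binv n l D \<and> card D \<le> q}. card (YS n p L l D))"
  proof (rule add_mono)
    show "card (EF ` subsets n p) \<le> card (subsets n p)" by (rule card_image_le) simp
    have "card (\<Union>l<L. \<Union>D\<in>{D. binv n l D \<and> card D \<le> q}. YS n p L l D) \<le> (\<Sum>l<L. card (\<Union>D\<in>{D. binv n l D \<and> card D \<le> q}. YS n p L l D))"
      by (rule card_UN_le) simp_all
    also have "\<dots> \<le> (\<Sum>l<L. \<Sum>D\<in>{D. binv n l D \<and> card D \<le> q}. card (YS n p L l D))"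
      by (intro sum_mono card_UN_le fDs)
    finally show "card (\<Union>l<L. \<Union>D\<in>{D. binv n l D \<and> card D \<le> q}. YS n p L l D) \<le> (\<Sum>l<L. \<Sum>D\<in>{D. binv n l D \<and> card D \<le> q}. card (YS n p L l D))" .
  qed
  finally have le: "real (card (TS n p q L)) \<le> real (card (subsets n p)) + (\<Sum>l<L. real (\<Sum>D\<in>{D. binv n l D \<and> card D \<le> q}. card (YS n p L l D)))"
    by (simp only: of_nat_add of_nat_sum[symmetric])
  have "card (subsets n p) = n choose p" unfolding subsets_def using n_subsets[of "{1..n}" p] by simp
  also have "\<dots> \<le> n ^ p" by (cases "p \<le> n") (auto simp: binomial_le_pow binomial_eq_0)
  finally have c1: "real (card (subsets n p)) \<le> real n ^ p" by (metis of_nat_le_iff of_nat_power)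
  have c2: "(\<Sum>l<L. real (\<Sum>D\<in>{D. binv n l D \<and> card D \<le> q}. card (YS n p L l D))) \<le> (\<Sum>l<L. Kc * (real n ^ p + real n ^ q))"
    by (intro sum_mono level_card lt) simp
  have c3: "(\<Sum>l<L. Kc * (real n ^ p + real n ^ q)) = real L * (Kc * (real n ^ p + real n ^ q))" by simp
  show ?thesis using le c1 c2 c3 by linarith
qed

lemma Sm_subs: "ys \<noteq> [] \<Longrightarrow> subs (Sm h ys) \<subseteq> (\<lambda>i. Sm h (drop i ys)) ` {..<length ys} \<union> (\<Union>y\<in>set ys. subs (h y))"
proof (induction h ys rule: Sm.induct)
  case (2 h y)
  then show ?case by auto
next
  case (3 h y z ys)
  have a: "Sm h (y # z # ys) \<in> (\<lambda>i. Sm h (drop i (y # z # ys))) ` {..<length (y # z # ys)}"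
    by (rule image_eqI[of _ _ 0]) auto
  have b: "(\<lambda>i. Sm h (drop i (z # ys))) ` {..<length (z # ys)} \<subseteq> (\<lambda>i. Sm h (drop i (y # z # ys))) ` {..<length (y # z # ys)}"
  proof
    fix t assume "t \<in> (\<lambda>i. Sm h (drop i (z # ys))) ` {..<length (z # ys)}"
    then obtain i where "i < length (z # ys)" "t = Sm h (drop i (z # ys))" by auto
    then show "t \<in> (\<lambda>i. Sm h (drop i (y # z # ys))) ` {..<length (y # z # ys)}"
      by (intro image_eqI[of _ _ "Suc i"]) auto
  qed
  have "subs (Sm h (y # z # ys)) = insert (Sm h (y # z # ys)) (subs (h y) \<union> subs (Sm h (z # ys)))" by simp
  have IH: "subs (Sm h (z # ys)) \<subseteq> (\<lambda>i. Sm h (drop i (z # ys))) ` {..<length (z # ys)} \<union> (\<Union>y\<in>set (z # ys). subs (h y))"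
    using 3 by simp
  have c: "(\<Union>y\<in>set (z # ys). subs (h y)) \<subseteq> (\<Union>y'\<in>set (y # z # ys). subs (h y'))" by auto
  have d: "subs (h y) \<subseteq> (\<Union>y'\<in>set (y # z # ys). subs (h y'))" by auto
  show ?case unfolding \<open>subs (Sm h (y # z # ys)) = _\<close>
    using a subset_trans[OF IH Un_mono[OF b c]] d by blast
qed simp

lemma Sm_Tm_shape: "ys \<noteq> [] \<Longrightarrow> \<exists>a b. Sm (Tm n p L) ys = EAdd a b \<or> Sm (Tm n p L) ys = EMul a b"
  by (induction "Tm n p L" ys rule: Sm.induct) (auto simp: Tm_def)

lemma finite_YS: "finite (YS n p L l D)"
proof -
  define R1 where "R1 = Rg n (Suc l) (par D)"
  define es where "es = esl n l D"
  define F where "F = (\<lambda>(i, W'). Yt p (n - card R1) (Gr n p L (L - Suc l) (par D)) (drop i es) W')"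
  have "YS n p L l D \<subseteq> F ` ({..length es} \<times> {W'. W' \<subseteq> R1 \<and> card W' < p})"
  proof
    fix t assume "t \<in> YS n p L l D"
    then obtain i W' where iW: "i \<le> length es" "W' \<subseteq> R1" "card W' < p"
      "t = Yt p (n - card R1) (Gr n p L (L - Suc l) (par D)) (drop i es) W'"
      unfolding YS_def R1_def es_def by blast
    then have "t = F (i, W')" unfolding F_def by simp
    moreover have "(i, W') \<in> {..length es} \<times> {W'. W' \<subseteq> R1 \<and> card W' < p}" using iW by simp
    ultimately show "t \<in> F ` ({..length es} \<times> {W'. W' \<subseteq> R1 \<and> card W' < p})" by (rule image_eqI)
  qed
  moreover have fS: "finite ({..length es} \<times> {W'. W' \<subseteq> R1 \<and> card W' < p})" by (simp add: R1_def)
  ultimately show ?thesis using finite_subset by blast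
qed

lemma finite_TS: "finite (TS n p q L)"
proof -
  have fDs: "finite {D. binv n l D \<and> card D \<le> q}" for l
  proof -
    have "{D. binv n l D \<and> card D \<le> q} \<subseteq> Pow {..<n}" using inv_sub by blast
    then show ?thesis using finite_subset by blast
  qed
  show ?thesis unfolding TS_def using fDs finite_YS by simp
qed

lemma ln2_ge: "1 / 2 \<le> ln (2::real)"
proof -
  have "ln (1 / 2 :: real) \<le> 1 / 2 - 1" by (rule ln_le_minus_one) simp
  moreover have "ln (1 / 2 :: real) = - ln 2" by (simp add: ln_div)
  ultimately show ?thesis by simp
qed




theorem mainTheorem10:
  shows "\<exists>c::real. \<forall>n p q :: nat. 0 < p \<and> 0 < q \<and> p + q \<le> n \<longrightarrow>
    (\<exists>C. circuit_wf n p q C \<and>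
         real (length C) \<le> c * (real n ^ p + real n ^ q) * ln (real n) \<and>
         (\<forall>(f :: nat set \<Rightarrow> 'a::semiring) g.
            circuit_value f g C =
              nsum (\<lambda>(X, Y). f X * g Y)
                {(X, Y). X \<in> subsets n p \<and> Y \<in> subsets n q \<and> X \<inter> Y = {}}))"
proof -
  define c where "c = 6 + 4 * Kc"
  have Kc0: "0 \<le> Kc" unfolding Kc_def by simp
  show ?thesis
  proof (rule exI[of _ c], intro allI impI)
    fix n p q :: nat assume a: "0 < p \<and> 0 < q \<and> p + q \<le> n"
    then have pq: "0 < p" "0 < q" "p + q \<le> n" by auto
    define L where "L = (LEAST L. n \<le> 2 ^ L)"
    have nL: "n \<le> 2 ^ L" unfolding L_def by (rule LeastI[of _ n]) (simp add: less_imp_le)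
    have lt: "2 ^ l < n" if "l < L" for l
      using not_less_Least[of l "\<lambda>L. n \<le> 2 ^ L"] that unfolding L_def by simp
    have n2: "2 \<le> n" using pq by simp
    have L1: "1 \<le> L"
    proof (rule ccontr)
      assume "\<not> 1 \<le> L" then have "L = 0" by simp
      then show False using nL n2 by simp
    qed
    have fq: "finite (subsets n q)" by simp
    obtain ys where ys: "distinct ys" "set ys = subsets n q"
      using finite_distinct_list[OF fq] by auto
    have nq: "subsets n q \<noteq> {}"
    proof -
      obtain Y where "Y \<subseteq> {1..n}" "card Y = q" using obtain_subset_with_card_n[of q "{1..n}"] pq by auto
      then show ?thesis unfolding subsets_def by auto
    qed
    then have ysne: "ys \<noteq> []" using ys by auto
    define T where "T = Sm (Tm n p L) ys"
    define SP where "SP = (\<lambda>i. Sm (Tm n p L) (drop i ys)) ` {..<length ys}"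
    have GT: "subs (Gr n p L L (D0 Y) {}) \<subseteq> TS n p q L" if Y: "Y \<in> subsets n q" for Y
    proof -
      have Ys: "Y \<subseteq> {1..n}" "card Y = q" using Y unfolding subsets_def by auto
      then have "Y \<noteq> {}" using pq by auto
      have "\<forall>d\<in>Y. d - 1 < n" using Ys(1) by fastforce
      then have inv0: "binv n 0 (D0 Y)" unfolding binv_def D0_def using \<open>Y \<noteq> {}\<close> by auto
      have fY: "finite Y" using Ys(1) finite_subset by blast
      have cD: "card (D0 Y) \<le> q" unfolding D0_def using card_image_le[OF fY, of "\<lambda>x. x - 1"] Ys by simp
      show ?thesis
        by (rule Gr_subs[OF nL]) (use inv0 cD Rg0[OF Ys(1)] Ys pq in auto)
    qed
    have subT: "subs T \<subseteq> TS n p q L \<union> SP \<union> Tm n p L ` set ys \<union> EG ` set ys"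
    proof -
      have "subs T \<subseteq> SP \<union> (\<Union>y\<in>set ys. subs (Tm n p L y))"
        unfolding T_def SP_def by (rule Sm_subs[OF ysne])
      moreover have "subs (Tm n p L y) \<subseteq> TS n p q L \<union> SP \<union> Tm n p L ` set ys \<union> EG ` set ys" if "y \<in> set ys" for y
      proof -
        have "subs (Tm n p L y) = insert (Tm n p L y) (subs (Gr n p L L (D0 y) {}) \<union> {EG y})"
          unfolding Tm_def by simp
        then show ?thesis using GT[of y] that ys(2) by blast
      qed
      ultimately show ?thesis by blast
    qed
    have shape: "\<exists>a b. t = EAdd a b \<or> t = EMul a b" if tS: "t \<in> SP" for t
    proof -
      obtain i where i: "i < length ys" "t = Sm (Tm n p L) (drop i ys)" using tS unfolding SP_def by auto
      then have "drop i ys \<noteq> []" by simp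
      then show ?thesis using Sm_Tm_shape i(2) by blast
    qed
    have vf: "X \<in> subsets n p" if "EF X \<in> subs T" for X
    proof -
      have "EF X \<in> TS n p q L" using subT that shape unfolding Tm_def by fastforce
      then show ?thesis unfolding TS_def YS_def by auto
    qed
    have vg: "Y \<in> subsets n q" if "EG Y \<in> subs T" for Y
    proof -
      have "EG Y \<notin> TS n p q L" unfolding TS_def YS_def by auto
      moreover have "EG Y \<notin> SP" using shape by blast
      moreover have "EG Y \<notin> Tm n p L ` set ys" unfolding Tm_def by auto
      ultimately have "EG Y \<in> EG ` set ys" using subT that by blast
      then show ?thesis using ys(2) by auto
    qed
    obtain C where C: "circuit_wf n p q C" "length C = card (subs T)"
      "\<forall>(f :: nat set \<Rightarrow> 'a::semiring) g. circuit_value f g C = eval f g T"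
      using compile[of T n p q, OF vf vg] by blast
    have "card (subs T) \<le> card (TS n p q L \<union> SP \<union> Tm n p L ` set ys \<union> EG ` set ys)"
      by (rule card_mono[OF _ subT]) (simp add: finite_TS SP_def)
    also have "\<dots> \<le> card (TS n p q L) + card SP + card (Tm n p L ` set ys) + card (EG ` set ys)"
      by (meson add_le_mono card_Un_le le_trans order_refl)
    also have "\<dots> \<le> card (TS n p q L) + card (subsets n q) + card (subsets n q) + card (subsets n q)"
    proof -
      have "card SP \<le> length ys" unfolding SP_def using card_image_le[of "{..<length ys}"] by fastforce
      moreover have "length ys = card (subsets n q)" using ys distinct_card by fastforce
      moreover have "card (Tm n p L ` set ys) \<le> card (subsets n q)" using card_image_le[of "set ys"] ys(2) by fastforce
      moreover have "card (EG ` set ys) \<le> card (subsets n q)" using card_image_le[of "set ys"] ys(2) by fastforce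
      ultimately show ?thesis by linarith
    qed
    finally have cardT: "card (subs T) \<le> card (TS n p q L) + 3 * card (subsets n q)" by simp
    have "card (subsets n q) = n choose q" unfolding subsets_def using n_subsets[of "{1..n}" q] by simp
    also have "\<dots> \<le> n ^ q" by (cases "q \<le> n") (auto simp: binomial_le_pow binomial_eq_0)
    finally have cq: "real (card (subsets n q)) \<le> real n ^ q" by (metis of_nat_le_iff of_nat_power)
    define N where "N = real n ^ p + real n ^ q"
    have N0: "0 \<le> N" unfolding N_def by simp
    have cTS: "real (card (TS n p q L)) \<le> real n ^ p + real L * (Kc * N)"
      unfolding N_def by (rule card_TS) (rule lt)
    have len: "real (length C) \<le> (3 + real L * Kc) * N"
    proof -
      have "real (length C) \<le> real (card (TS n p q L)) + 3 * real (card (subsets n q))"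
        using cardT C(2) by linarith
      also have "\<dots> \<le> real n ^ p + real L * (Kc * N) + 3 * real n ^ q" using cTS cq by linarith
      also have "\<dots> \<le> (3 + real L * Kc) * N" unfolding N_def by (simp add: algebra_simps)
      finally show ?thesis .
    qed
    have ln2: "1 / 2 \<le> ln (2::real)" by (rule ln2_ge)
    have lnn: "ln 2 \<le> ln (real n)" using n2 by simp
    have Lb: "real L \<le> 1 + 2 * ln (real n)"
    proof -
      have "2 ^ (L - 1) < n" using lt[of "L - 1"] L1 by simp
      then have "real (2 ^ (L - 1)) < real n" by linarith
      then have "ln (2 ^ (L - 1)) < ln (real n)" by simp
      then have "real (L - 1) * ln 2 < ln (real n)" by (simp add: ln_realpow)
      moreover have "real (L - 1) * (1 / 2) \<le> real (L - 1) * ln 2" by (rule mult_left_mono[OF ln2]) simp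
      ultimately have "real (L - 1) \<le> 2 * ln (real n)" by simp
      then show ?thesis using L1 by simp
    qed
    have "3 + real L * Kc \<le> c * ln (real n)"
    proof -
      have "real L * Kc \<le> (1 + 2 * ln (real n)) * Kc" by (rule mult_right_mono[OF Lb Kc0])
      also have "\<dots> \<le> (4 * ln (real n)) * Kc" by (rule mult_right_mono) (use ln2 lnn Kc0 in simp_all)
      finally show ?thesis unfolding c_def using ln2 lnn by (simp add: algebra_simps)
    qed
    then have "real (length C) \<le> c * ln (real n) * N" using len mult_right_mono[OF _ N0] by (meson order_trans)
    then have len2: "real (length C) \<le> c * (real n ^ p + real n ^ q) * ln (real n)" unfolding N_def by (simp add: mult_ac)
    have val: "circuit_value f g C = nsum (\<lambda>(X, Y). f X * g Y)
                {(X, Y). X \<in> subsets n p \<and> Y \<in> subsets n q \<and> X \<inter> Y = {}}" for f :: "nat set \<Rightarrow> 'a::semiring" and g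
      using C(3) total_sem[OF nL pq(3) pq(2) ys] unfolding T_def by simp
    show "\<exists>C. circuit_wf n p q C \<and>
         real (length C) \<le> c * (real n ^ p + real n ^ q) * ln (real n) \<and>
         (\<forall>(f :: nat set \<Rightarrow> 'a::semiring) g.
            circuit_value f g C =
              nsum (\<lambda>(X, Y). f X * g Y)
                {(X, Y). X \<in> subsets n p \<and> Y \<in> subsets n q \<and> X \<inter> Y = {}})"
      using C(1) len2 val by blast
  qed
qed


end
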